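(* Let $M$ be a complete pointed metric space and let $V=\{m_{xy}: x,y\in M,\ x\neq y\}\subset\mathcal F(M)$ be the set of molecules. Then the weak closure of $V$ in $\mathcal F(M)$ is contained in $V\cup\{0\}$.
   Context: A pointed metric space $M$ has a distinguished origin $0$. $\mathrm{Lip}_0(M)$ is the Banach space of real Lipschitz functions on $M$ vanishing at $0$ with the best Lipschitz constant as norm; $\delta(x)\in\mathrm{Lip}_0(M)^*$ is evaluation at $x$, and the Lipschitz free space $\mathcal F(M)$ is the closed linear span of $\delta(M)$ in $\mathrm{Lip}_0(M)^*$, with $\mathcal F(M)^*=\mathrm{Lip}_0(M)$. The molecule is $m_{xy}=(\delta(x)-\delta(y))/d(x,y)$ for $x\neq y$. *)

theory Defs
  imports "HOL-Analysis.Analysis"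
begin

text \<open>Elements of Lip_0(M)^* are represented as functionals on real functions on 'a;
  only their values on Lip0 z are meaningful, so equalities are stated on Lip0 z.\<close>

definition Lip0 :: "'a::metric_space \<Rightarrow> ('a \<Rightarrow> real) set" where
  "Lip0 z = {f. f z = 0 \<and> (\<exists>L. L-lipschitz_on UNIV f)}"

definition delta :: "'a \<Rightarrow> ('a \<Rightarrow> real) \<Rightarrow> real" where
  "delta x = (\<lambda>f. f x)"

definition molecule :: "'a::metric_space \<Rightarrow> 'a \<Rightarrow> ('a \<Rightarrow> real) \<Rightarrow> real" where
  "molecule x y = (\<lambda>f. (delta x f - delta y f) / dist x y)"

definition molecules :: "(('a::metric_space \<Rightarrow> real) \<Rightarrow> real) set" where
  "molecules = {molecule x y | x y. x \<noteq> y}"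

text \<open>The free space F(M): the norm closure (in the dual norm of Lip_0(M)^*) of the
  linear span of delta(M). A functional mu belongs to it iff for every eps > 0 there is a
  finite linear combination psi of deltas with |mu f - psi f| <= eps * L for every f in
  Lip0 z that is L-Lipschitz, i.e. the dual norm of mu - psi is at most eps.\<close>
definition free_space :: "'a::metric_space \<Rightarrow> (('a \<Rightarrow> real) \<Rightarrow> real) set" where
  "free_space z = {\<mu>. \<forall>\<epsilon>>0. \<exists>S c. finite S \<and>
     (\<forall>f\<in>Lip0 z. \<forall>L. L-lipschitz_on UNIV f \<longrightarrow>
        \<bar>\<mu> f - (\<Sum>x\<in>S. c x * delta x f)\<bar> \<le> \<epsilon> * L)}"

text \<open>Weak closure in F(M) of a set A: the weak topology sigma(F(M), F(M)^*) with
  F(M)^* = Lip_0(M); basic weak neighbourhoods of mu are given by finitely many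
  f in Lip_0(M) and eps > 0.\<close>
definition weak_closure :: "'a::metric_space \<Rightarrow> (('a \<Rightarrow> real) \<Rightarrow> real) set
    \<Rightarrow> (('a \<Rightarrow> real) \<Rightarrow> real) set" where
  "weak_closure z A = {\<mu> \<in> free_space z. \<forall>F \<epsilon>. finite F \<and> F \<subseteq> Lip0 z \<and> \<epsilon> > 0 \<longrightarrow>
     (\<exists>\<nu>\<in>A. \<forall>f\<in>F. \<bar>\<mu> f - \<nu> f\<bar> < \<epsilon>)}"

end

theory Submission
  imports Defs
begin


lemma lip_max:
  fixes f g :: "'a::metric_space \<Rightarrow> real"
  assumes "L-lipschitz_on U f" "L-lipschitz_on U g"
  shows "L-lipschitz_on U (\<lambda>x. max (f x) (g x))"
proof (rule lipschitz_onI)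
  show "0 \<le> L" using assms(1) lipschitz_on_nonneg by blast
  fix x y assume xy: "x \<in> U" "y \<in> U"
  have a: "\<bar>f x - f y\<bar> \<le> L * dist x y" using lipschitz_onD[OF assms(1) xy] by (simp add: dist_real_def)
  have b: "\<bar>g x - g y\<bar> \<le> L * dist x y" using lipschitz_onD[OF assms(2) xy] by (simp add: dist_real_def)
  show "dist (max (f x) (g x)) (max (f y) (g y)) \<le> L * dist x y"
    using a b by (simp add: dist_real_def max_def abs_le_iff)
qed

lemma lip_min:
  fixes f g :: "'a::metric_space \<Rightarrow> real"
  assumes "L-lipschitz_on U f" "L-lipschitz_on U g"
  shows "L-lipschitz_on U (\<lambda>x. min (f x) (g x))"
proof (rule lipschitz_onI)
  show "0 \<le> L" using assms(1) lipschitz_on_nonneg by blast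
  fix x y assume xy: "x \<in> U" "y \<in> U"
  have a: "\<bar>f x - f y\<bar> \<le> L * dist x y" using lipschitz_onD[OF assms(1) xy] by (simp add: dist_real_def)
  have b: "\<bar>g x - g y\<bar> \<le> L * dist x y" using lipschitz_onD[OF assms(2) xy] by (simp add: dist_real_def)
  show "dist (min (f x) (g x)) (min (f y) (g y)) \<le> L * dist x y"
    using a b by (simp add: dist_real_def min_def abs_le_iff)
qed

lemma lip_const: "L \<ge> 0 \<Longrightarrow> L-lipschitz_on U (\<lambda>x. c)"
  by (rule lipschitz_onI) auto

lemma lip_infdist: "1-lipschitz_on U (\<lambda>x. infdist x T)"
  by (rule lipschitz_onI) (auto simp: dist_real_def infdist_triangle_abs)

lemma lip_dist: "1-lipschitz_on U (\<lambda>x. dist x p)"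
proof (rule lipschitz_onI)
  fix x y
  show "dist (dist x p) (dist y p) \<le> 1 * dist x y"
    using dist_triangle[of x p y] dist_triangle[of y p x] by (simp add: dist_real_def abs_le_iff dist_commute)
qed simp

lemma Lip0_lipE:
  assumes "f \<in> Lip0 z" obtains L where "L > 0" "L-lipschitz_on UNIV f"
proof -
  obtain L where "L-lipschitz_on UNIV f" using assms by (auto simp: Lip0_def)
  then have "(L+1)-lipschitz_on UNIV f" "L + 1 > 0"
    using lipschitz_on_mono[of L UNIV f] lipschitz_on_nonneg by fastforce+
  then show ?thesis using that by blast
qed

lemma Lip0I: "f z = 0 \<Longrightarrow> L-lipschitz_on UNIV f \<Longrightarrow> f \<in> Lip0 z"
  by (auto simp: Lip0_def)

lemma free_approx:
  assumes "\<mu> \<in> free_space z" "\<epsilon> > 0"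
  obtains S c where "finite S"
    "\<And>f L. f \<in> Lip0 z \<Longrightarrow> L-lipschitz_on UNIV f \<Longrightarrow> \<bar>\<mu> f - (\<Sum>x\<in>S. c x * f x)\<bar> \<le> \<epsilon> * L"
proof -
  from assms have "\<exists>S c. finite S \<and> (\<forall>f\<in>Lip0 z. \<forall>L. L-lipschitz_on UNIV f \<longrightarrow> \<bar>\<mu> f - (\<Sum>x\<in>S. c x * delta x f)\<bar> \<le> \<epsilon> * L)"
    unfolding free_space_def by simp
  then show ?thesis using that unfolding delta_def by blast
qed



definition freq :: "'a::metric_space \<Rightarrow> (('a\<Rightarrow>real)\<Rightarrow>real) \<Rightarrow> ('a\<times>'a) set \<Rightarrow> bool" where
  "freq z \<mu> A \<longleftrightarrow> (\<forall>F \<epsilon>. finite F \<and> F \<subseteq> Lip0 z \<and> \<epsilon> > 0 \<longrightarrow>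
     (\<exists>p\<in>A. fst p \<noteq> snd p \<and> (\<forall>f\<in>F. \<bar>\<mu> f - molecule (fst p) (snd p) f\<bar> < \<epsilon>)))"

lemma freq_start:
  assumes "\<mu> \<in> weak_closure z molecules"
  shows "freq z \<mu> UNIV"
  unfolding freq_def
proof (intro allI impI)
  fix F and \<epsilon> :: real assume h: "finite F \<and> F \<subseteq> Lip0 z \<and> \<epsilon> > 0"
  then obtain \<nu> where "\<nu> \<in> molecules" "\<forall>f\<in>F. \<bar>\<mu> f - \<nu> f\<bar> < \<epsilon>"
    using assms unfolding weak_closure_def by blast
  then obtain x y where "x \<noteq> y" "\<nu> = molecule x y" "\<forall>f\<in>F. \<bar>\<mu> f - \<nu> f\<bar> < \<epsilon>"
    unfolding molecules_def by blast
  then show "\<exists>p\<in>UNIV. fst p \<noteq> snd p \<and> (\<forall>f\<in>F. \<bar>\<mu> f - molecule (fst p) (snd p) f\<bar> < \<epsilon>)"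
    by (intro bexI[of _ "(x,y)"]) auto
qed

lemma freq_D:
  assumes "freq z \<mu> A" "finite F" "F \<subseteq> Lip0 z" "\<epsilon> > 0"
  obtains p where "p \<in> A" "fst p \<noteq> snd p" "\<forall>f\<in>F. \<bar>\<mu> f - molecule (fst p) (snd p) f\<bar> < \<epsilon>"
proof -
  have "\<exists>p\<in>A. fst p \<noteq> snd p \<and> (\<forall>f\<in>F. \<bar>\<mu> f - molecule (fst p) (snd p) f\<bar> < \<epsilon>)"
    using assms(1) assms(2-4) unfolding freq_def by blast
  then show ?thesis using that by blast
qed

lemma freq_nonempty:
  assumes "freq z \<mu> A"
  obtains x y where "(x,y) \<in> A"
proof -
  obtain p where "p \<in> A" "fst p \<noteq> snd p" "\<forall>f\<in>{}. \<bar>\<mu> f - molecule (fst p) (snd p) f\<bar> < (1::real)"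
    by (rule freq_D[OF assms, of "{}" 1]) auto
  then show ?thesis using that[of "fst p" "snd p"] by simp
qed

lemma freq_get:
  assumes "freq z \<mu> A" "f \<in> Lip0 z" "e > 0"
  obtains x y where "(x,y) \<in> A" "x \<noteq> y" "\<bar>\<mu> f - molecule x y f\<bar> < e"
proof -
  obtain p where p: "p \<in> A" "fst p \<noteq> snd p" "\<forall>g\<in>{f}. \<bar>\<mu> g - molecule (fst p) (snd p) g\<bar> < e"
    using freq_D[OF assms(1), of "{f}" e] assms(2,3) by auto
  show ?thesis using that[of "fst p" "snd p"] p by simp
qed

lemma freq_mono: assumes "freq z \<mu> A" "A \<subseteq> B" shows "freq z \<mu> B"
  unfolding freq_def
proof (intro allI impI)
  fix F and \<epsilon> :: real assume h: "finite F \<and> F \<subseteq> Lip0 z \<and> \<epsilon> > 0"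
  then obtain p where "p \<in> A" "fst p \<noteq> snd p" "\<forall>f\<in>F. \<bar>\<mu> f - molecule (fst p) (snd p) f\<bar> < \<epsilon>"
    using freq_D[OF assms(1)] by blast
  then show "\<exists>p\<in>B. fst p \<noteq> snd p \<and> (\<forall>f\<in>F. \<bar>\<mu> f - molecule (fst p) (snd p) f\<bar> < \<epsilon>)"
    using assms(2) by blast
qed

lemma freq_restrict:
  assumes "freq z \<mu> A" "finite F0" "F0 \<subseteq> Lip0 z" "e0 > 0"
  shows "freq z \<mu> {p\<in>A. fst p \<noteq> snd p \<and> (\<forall>f\<in>F0. \<bar>\<mu> f - molecule (fst p) (snd p) f\<bar> < e0)}"
  unfolding freq_def
proof (intro allI impI)
  fix F and \<epsilon> :: real assume h: "finite F \<and> F \<subseteq> Lip0 z \<and> \<epsilon> > 0"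
  then have h2: "finite (F \<union> F0)" "F \<union> F0 \<subseteq> Lip0 z" "min \<epsilon> e0 > 0" using assms by auto
  obtain p where p: "p \<in> A" "fst p \<noteq> snd p" "\<forall>f\<in>F \<union> F0. \<bar>\<mu> f - molecule (fst p) (snd p) f\<bar> < min \<epsilon> e0"
    using freq_D[OF assms(1) h2] by blast
  then show "\<exists>p\<in>{p\<in>A. fst p \<noteq> snd p \<and> (\<forall>f\<in>F0. \<bar>\<mu> f - molecule (fst p) (snd p) f\<bar> < e0)}.
      fst p \<noteq> snd p \<and> (\<forall>f\<in>F. \<bar>\<mu> f - molecule (fst p) (snd p) f\<bar> < \<epsilon>)"
    by (intro bexI[of _ p]) auto
qed

lemma not_freqE:
  assumes "\<not> freq z \<mu> A"
  obtains F e where "finite F" "F \<subseteq> Lip0 z" "e > 0"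
      "\<And>p. p\<in>A \<Longrightarrow> fst p \<noteq> snd p \<Longrightarrow> \<not>(\<forall>f\<in>F. \<bar>\<mu> f - molecule (fst p) (snd p) f\<bar> < e)"
proof -
  have "\<exists>F e. (finite F \<and> F \<subseteq> Lip0 z \<and> e > 0) \<and> \<not>(\<exists>p\<in>A. fst p \<noteq> snd p \<and> (\<forall>f\<in>F. \<bar>\<mu> f - molecule (fst p) (snd p) f\<bar> < e))"
    using assms unfolding freq_def by blast
  then show ?thesis using that by blast
qed

lemma freq_Un:
  assumes "freq z \<mu> (A \<union> B)" shows "freq z \<mu> A \<or> freq z \<mu> B"
proof (rule ccontr)
  assume "\<not> (freq z \<mu> A \<or> freq z \<mu> B)"
  then have nA: "\<not> freq z \<mu> A" and nB: "\<not> freq z \<mu> B" by auto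
  obtain F1 e1 where 1: "finite F1" "F1 \<subseteq> Lip0 z" "e1 > 0"
      "\<And>p. p\<in>A \<Longrightarrow> fst p \<noteq> snd p \<Longrightarrow> \<not>(\<forall>f\<in>F1. \<bar>\<mu> f - molecule (fst p) (snd p) f\<bar> < e1)"
    using not_freqE[OF nA] by metis
  obtain F2 e2 where 2: "finite F2" "F2 \<subseteq> Lip0 z" "e2 > 0"
      "\<And>p. p\<in>B \<Longrightarrow> fst p \<noteq> snd p \<Longrightarrow> \<not>(\<forall>f\<in>F2. \<bar>\<mu> f - molecule (fst p) (snd p) f\<bar> < e2)"
    using not_freqE[OF nB] by metis
  have h: "finite (F1 \<union> F2)" "F1 \<union> F2 \<subseteq> Lip0 z" "min e1 e2 > 0" using 1 2 by auto
  obtain p where p: "p \<in> A \<union> B" "fst p \<noteq> snd p" "\<forall>f\<in>F1 \<union> F2. \<bar>\<mu> f - molecule (fst p) (snd p) f\<bar> < min e1 e2"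
    using freq_D[OF assms h] by blast
  show False
  proof (cases "p \<in> A")
    case True then show False using 1(4)[OF True p(2)] p(3) by auto
  next
    case False then have "p \<in> B" using p(1) by auto
    then show False using 2(4)[OF _ p(2)] p(3) by auto
  qed
qed

lemma freq_empty: "\<not> freq z \<mu> {}"
  using freq_nonempty by blast

lemma freq_UN:
  assumes "finite I" "freq z \<mu> (\<Union>i\<in>I. A i)" shows "\<exists>i\<in>I. freq z \<mu> (A i)"
  using assms
proof (induction I rule: finite_induct)
  case empty then show ?case using freq_empty by auto
next
  case (insert i I)
  then have "freq z \<mu> (A i \<union> (\<Union>i\<in>I. A i))" by simp
  then show ?case using freq_Un insert by blast
qed

lemma mu_zero:
  assumes "\<mu> \<in> free_space z" shows "\<mu> (\<lambda>x. 0) = 0"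
proof -
  obtain S c where S: "finite S"
    "\<And>f L. f \<in> Lip0 z \<Longrightarrow> L-lipschitz_on UNIV f \<Longrightarrow> \<bar>\<mu> f - (\<Sum>x\<in>S. c x * f x)\<bar> \<le> 1 * L"
    using free_approx[OF assms, of 1] by auto
  have "(\<lambda>x. 0) \<in> Lip0 z" by (rule Lip0I[of _ _ 0]) (auto intro: lip_const)
  from S(2)[OF this lip_const[of 0]] show ?thesis by simp
qed

lemma SC:
  assumes mu: "\<mu> \<in> free_space z"
    and g: "\<And>n. g n \<in> Lip0 z" "\<And>n. L-lipschitz_on UNIV (g n)"
    and g0: "g0 \<in> Lip0 z" "L-lipschitz_on UNIV g0"
    and lim: "\<And>t. (\<lambda>n. g n t) \<longlonglongrightarrow> g0 t"
  shows "(\<lambda>n. \<mu> (g n)) \<longlonglongrightarrow> \<mu> g0"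
proof (rule metric_LIMSEQ_I)
  fix e :: real assume e: "e > 0"
  have L: "L \<ge> 0" using g0(2) lipschitz_on_nonneg by blast
  define \<epsilon> where "\<epsilon> = e / (3 * (L + 1))"
  have \<epsilon>: "\<epsilon> > 0" "2 * \<epsilon> * L < 2 * e / 3" using e L by (auto simp: \<epsilon>_def field_simps)
  obtain S c where S: "finite S"
    "\<And>f L. f \<in> Lip0 z \<Longrightarrow> L-lipschitz_on UNIV f \<Longrightarrow> \<bar>\<mu> f - (\<Sum>x\<in>S. c x * f x)\<bar> \<le> \<epsilon> * L"
    using free_approx[OF mu \<epsilon>(1)] by auto
  have tl: "(\<lambda>n. \<Sum>x\<in>S. c x * g n x) \<longlonglongrightarrow> (\<Sum>x\<in>S. c x * g0 x)"
    by (intro tendsto_sum tendsto_mult_left lim)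
  obtain N where N: "\<forall>n\<ge>N. dist (\<Sum>x\<in>S. c x * g n x) (\<Sum>x\<in>S. c x * g0 x) < e / 3"
    using metric_LIMSEQ_D[OF tl, of "e/3"] e by auto
  show "\<exists>N. \<forall>n\<ge>N. dist (\<mu> (g n)) (\<mu> g0) < e"
  proof (intro exI allI impI)
    fix n assume "n \<ge> N"
    then have a: "\<bar>(\<Sum>x\<in>S. c x * g n x) - (\<Sum>x\<in>S. c x * g0 x)\<bar> < e/3" using N by (simp add: dist_real_def)
    have b: "\<bar>\<mu> (g n) - (\<Sum>x\<in>S. c x * g n x)\<bar> \<le> \<epsilon> * L" using S(2) g by blast
    have c: "\<bar>\<mu> g0 - (\<Sum>x\<in>S. c x * g0 x)\<bar> \<le> \<epsilon> * L" using S(2) g0 by blast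
    have "\<bar>\<mu> (g n) - \<mu> g0\<bar> < e" using a b c \<epsilon>(2) by linarith
    then show "dist (\<mu> (g n)) (\<mu> g0) < e" by (simp add: dist_real_def)
  qed
qed



lemma lip_scaled_pos:
  fixes g :: "'a::metric_space \<Rightarrow> real"
  assumes "1-lipschitz_on U g" "c \<ge> 0"
  shows "c-lipschitz_on U (\<lambda>t. c * max 0 (g t))"
proof (rule lipschitz_onI)
  fix x y assume xy: "x \<in> U" "y \<in> U"
  have a: "\<bar>g x - g y\<bar> \<le> dist x y" using lipschitz_onD[OF assms(1) xy] by (simp add: dist_real_def)
  have b: "\<bar>max 0 (g x) - max 0 (g y)\<bar> \<le> \<bar>g x - g y\<bar>"
    by (cases "g x \<ge> 0"; cases "g y \<ge> 0") (auto simp: max_def abs_if)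
  have "\<bar>c * max 0 (g x) - c * max 0 (g y)\<bar> = c * \<bar>max 0 (g x) - max 0 (g y)\<bar>"
  proof -
    have "c * max 0 (g x) - c * max 0 (g y) = c * (max 0 (g x) - max 0 (g y))" by (simp add: algebra_simps)
    then show ?thesis using assms(2) by (simp add: abs_mult)
  qed
  also have "\<dots> \<le> c * dist x y" using a b assms(2) by (simp add: mult_left_mono)
  finally show "dist (c * max 0 (g x)) (c * max 0 (g y)) \<le> c * dist x y" by (simp add: dist_real_def)
qed (simp add: assms)

lemma infdist_lt:
  assumes "finite T" "T \<noteq> {}" "infdist x T < r"
  obtains p where "p \<in> T" "dist x p < r"
proof -
  have "\<exists>p\<in>T. dist x p < r"
  proof (rule ccontr)
    assume "\<not> ?thesis"
    then have "r \<le> (INF a\<in>T. dist x a)" by (intro cINF_greatest assms(2)) auto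
    then show False using assms(3) infdist_notempty[OF assms(2)] by simp
  qed
  then show ?thesis using that by blast
qed

lemma mol_eq: "molecule x y g = (g x - g y) / dist x y"
  by (simp add: molecule_def delta_def)

context
  fixes z :: "'a::metric_space" and \<mu> and f1 and C L1
  assumes mu: "\<mu> \<in> free_space z"
    and f1: "f1 \<in> Lip0 z" "L1-lipschitz_on UNIV f1" "L1 > 0" "C > 0" "\<And>t. \<bar>f1 t\<bar> \<le> C" "\<mu> f1 \<noteq> 0"
begin

lemma keyK:
  assumes A: "freq z \<mu> A" and r: "r > 0"
  shows "\<exists>p q. freq z \<mu> {pr\<in>A. dist (fst pr) p < r \<and> dist (snd pr) q < r}"
proof -
  define \<alpha> where "\<alpha> = \<mu> f1"
  have \<alpha>: "\<bar>\<alpha>\<bar> > 0" using f1(6) by (simp add: \<alpha>_def)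
  define K0 where "K0 = max L1 (2*C/r)"
  have K0: "K0 \<ge> L1" "K0 * (r/2) \<ge> C" "K0 > 0"
  proof -
    show "K0 \<ge> L1" by (simp add: K0_def)
    have "K0 \<ge> 2*C/r" by (simp add: K0_def)
    then have "K0 * (r/2) \<ge> (2*C/r) * (r/2)" using r by (intro mult_right_mono) auto
    then show "K0 * (r/2) \<ge> C" using r by simp
    show "K0 > 0" using f1(3) by (simp add: K0_def)
  qed
  define Dm where "Dm = 8*C/\<bar>\<alpha>\<bar>"
  have Dm: "Dm > 0" using \<alpha> f1(4) by (simp add: Dm_def)
  define \<epsilon> where "\<epsilon> = min (\<bar>\<alpha>\<bar>/(2*(K0+L1))) (r/(4*Dm))"
  have \<epsilon>: "\<epsilon> > 0" "\<epsilon>*(K0+L1) \<le> \<bar>\<alpha>\<bar>/2" "4*\<epsilon>*Dm \<le> r"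
  proof -
    show "\<epsilon> > 0" using \<alpha> K0 f1(3) r Dm by (simp add: \<epsilon>_def)
    have "\<epsilon> \<le> \<bar>\<alpha>\<bar>/(2*(K0+L1))" by (simp add: \<epsilon>_def)
    then have "\<epsilon>*(K0+L1) \<le> \<bar>\<alpha>\<bar>/(2*(K0+L1)) * (K0+L1)" using K0 f1(3) by (intro mult_right_mono) auto
    moreover have "\<bar>\<alpha>\<bar>/(2*(K0+L1)) * (K0+L1) = \<bar>\<alpha>\<bar>/2" using K0 f1(3) by (simp add: field_simps)
    ultimately show "\<epsilon>*(K0+L1) \<le> \<bar>\<alpha>\<bar>/2" by linarith
    have "\<epsilon> \<le> r/(4*Dm)" by (simp add: \<epsilon>_def)
    then have "\<epsilon>*(4*Dm) \<le> r/(4*Dm)*(4*Dm)" using Dm by (intro mult_right_mono) auto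
    then show "4*\<epsilon>*Dm \<le> r" using Dm by (simp add: mult_ac)
  qed
  obtain S c where S: "finite S"
    "\<And>f L. f \<in> Lip0 z \<Longrightarrow> L-lipschitz_on UNIV f \<Longrightarrow> \<bar>\<mu> f - (\<Sum>x\<in>S. c x * f x)\<bar> \<le> \<epsilon> * L"
    using free_approx[OF mu \<epsilon>(1)] by auto
  define T where "T = insert z S"
  have T: "finite T" "T \<noteq> {}" "z \<in> T" "S \<subseteq> T" using S(1) by (auto simp: T_def)
  define \<phi> where "\<phi> t = K0 * max 0 (r/2 - infdist t T)" for t
  define f where "f t = max (- \<phi> t) (min (f1 t) (\<phi> t))" for t
  define k where "k t = min (infdist t T) r" for t
  have \<phi>lip: "K0-lipschitz_on UNIV \<phi>"
  proof -
    have "1-lipschitz_on UNIV (\<lambda>t. r/2 - infdist t T)"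
      using lipschitz_on_diff[OF lip_const[of 0 UNIV "r/2"] lip_infdist[of UNIV T]] by simp
    from lip_scaled_pos[OF this, of K0] K0(3) show ?thesis unfolding \<phi>_def by simp
  qed
  have \<phi>nn: "\<phi> t \<ge> 0" for t using K0(3) by (simp add: \<phi>_def)
  have flip: "K0-lipschitz_on UNIV f"
  proof -
    have "K0-lipschitz_on UNIV f1" using lipschitz_on_mono[OF f1(2) _ K0(1)] by simp
    then show ?thesis unfolding f_def using \<phi>lip
      by (intro lip_max lip_min) (auto simp: lipschitz_on_minus)
  qed
  have f1z: "f1 z = 0" using f1(1) by (simp add: Lip0_def)
  have fz: "f z = 0" using \<phi>nn[of z] f1z by (simp add: f_def)
  have fLip0: "f \<in> Lip0 z" using Lip0I[OF fz flip] .
  have fT: "f s = f1 s" if "s \<in> T" for s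
  proof -
    have "\<phi> s = K0 * (r/2)" using that r by (simp add: \<phi>_def)
    then have "\<bar>f1 s\<bar> \<le> \<phi> s" using f1(5)[of s] K0(2) by linarith
    then show ?thesis by (simp add: f_def abs_le_iff)
  qed
  have ffar: "f t = 0" if "infdist t T \<ge> r/2" for t
    using that by (simp add: f_def \<phi>_def)
  have fbd: "\<bar>f t\<bar> \<le> C" for t
  proof -
    have "\<bar>f t\<bar> \<le> \<bar>f1 t\<bar>" using \<phi>nn[of t] by (simp add: f_def abs_le_iff max_def min_def) linarith
    then show ?thesis using f1(5)[of t] by linarith
  qed
  have klip: "1-lipschitz_on UNIV k"
    unfolding k_def by (intro lip_min lip_infdist lip_const) simp
  have kz: "k z = 0" using T(3) r by (simp add: k_def)
  have kLip0: "k \<in> Lip0 z" using Lip0I[OF kz klip] .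
  have kT: "k s = 0" if "s \<in> T" for s using that r by (simp add: k_def)
  have muf: "\<bar>\<mu> f - \<alpha>\<bar> \<le> \<bar>\<alpha>\<bar>/2"
  proof -
    have a: "\<bar>\<mu> f - (\<Sum>x\<in>S. c x * f x)\<bar> \<le> \<epsilon> * K0" using S(2)[OF fLip0 flip] .
    have b: "\<bar>\<mu> f1 - (\<Sum>x\<in>S. c x * f1 x)\<bar> \<le> \<epsilon> * L1" using S(2)[OF f1(1) f1(2)] .
    have e: "(\<Sum>x\<in>S. c x * f x) = (\<Sum>x\<in>S. c x * f1 x)" using fT T(4) by (intro sum.cong) auto
    have "\<bar>\<mu> f - \<alpha>\<bar> \<le> \<epsilon> * K0 + \<epsilon> * L1" using a b e unfolding \<alpha>_def by linarith
    then show ?thesis using \<epsilon>(2) by (simp add: distrib_left)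
  qed
  have muk: "\<bar>\<mu> k\<bar> \<le> \<epsilon>"
  proof -
    have a: "\<bar>\<mu> k - (\<Sum>x\<in>S. c x * k x)\<bar> \<le> \<epsilon> * 1" using S(2)[OF kLip0 klip] .
    have e: "(\<Sum>x\<in>S. c x * k x) = 0" using kT T(4) by (intro sum.neutral) auto
    show ?thesis using a e by simp
  qed
  define A' where "A' = {p\<in>A. fst p \<noteq> snd p \<and> (\<forall>g\<in>{f,k}. \<bar>\<mu> g - molecule (fst p) (snd p) g\<bar> < min (\<bar>\<alpha>\<bar>/4) \<epsilon>)}"
  have A': "freq z \<mu> A'" unfolding A'_def
    using fLip0 kLip0 \<alpha> \<epsilon>(1) by (intro freq_restrict[OF A]) auto
  have near: "infdist x T < r \<and> infdist y T < r" if xy: "(x,y) \<in> A'" for x y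
  proof -
    have ne: "x \<noteq> y" and h1: "\<bar>\<mu> f - (f x - f y) / dist x y\<bar> < \<bar>\<alpha>\<bar>/4"
      and h2: "\<bar>\<mu> k - (k x - k y) / dist x y\<bar> < \<epsilon>"
      using xy by (auto simp: A'_def mol_eq)
    define D where "D = dist x y"
    have D: "D > 0" using ne by (simp add: D_def)
    have mf: "\<bar>(f x - f y) / D\<bar> > \<bar>\<alpha>\<bar>/4" using h1 muf unfolding D_def by linarith
    have notboth: "\<not> (infdist x T \<ge> r/2 \<and> infdist y T \<ge> r/2)"
    proof
      assume "infdist x T \<ge> r/2 \<and> infdist y T \<ge> r/2"
      then have "f x = 0" "f y = 0" using ffar by auto
      then show False using mf \<alpha> by simp
    qed
    have Dlt: "D < Dm"
    proof -
      have "\<bar>f x - f y\<bar> \<le> 2*C" using fbd[of x] fbd[of y] by linarith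
      moreover have "\<bar>f x - f y\<bar> = \<bar>(f x - f y) / D\<bar> * D" using D by (simp add: abs_divide)
      moreover have "\<bar>\<alpha>\<bar>/4 * D < \<bar>(f x - f y) / D\<bar> * D" using mf D by (intro mult_strict_right_mono) auto
      ultimately have "\<bar>\<alpha>\<bar>/4 * D < 2*C" by linarith
      then have "\<bar>\<alpha>\<bar> * D < 8*C" by simp
      then show ?thesis using \<alpha> by (simp add: Dm_def field_simps)
    qed
    have mk: "\<bar>k x - k y\<bar> < r/2"
    proof -
      have "\<bar>(k x - k y) / D\<bar> < 2*\<epsilon>" using h2 muk unfolding D_def by linarith
      then have "\<bar>(k x - k y) / D\<bar> * D < 2*\<epsilon> * D" using D by (intro mult_strict_right_mono) auto
      moreover have "\<bar>k x - k y\<bar> = \<bar>(k x - k y) / D\<bar> * D" using D by (simp add: abs_divide)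
      moreover have "2*\<epsilon>*D \<le> 2*\<epsilon>*Dm" using Dlt \<epsilon>(1) by simp
      ultimately show ?thesis using \<epsilon>(3) by linarith
    qed
    show ?thesis
    proof (rule ccontr)
      assume "\<not> ?thesis"
      then consider "infdist x T \<ge> r" | "infdist y T \<ge> r" by linarith
      then show False
      proof cases
        case 1
        then have "infdist y T < r/2" using notboth r by linarith
        then have "k x = r" "k y < r/2" using 1 r by (auto simp: k_def)
        then show False using mk by linarith
      next
        case 2
        then have "infdist x T < r/2" using notboth r by linarith
        then have "k y = r" "k x < r/2" using 2 r by (auto simp: k_def)
        then show False using mk by linarith
      qed
    qed
  qed
  define B where "B = (\<lambda>(p,q). {pr\<in>A. dist (fst pr) p < r \<and> dist (snd pr) q < r})"
  have "A' \<subseteq> (\<Union>i\<in>T\<times>T. B i)"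
  proof
    fix pr assume pr: "pr \<in> A'"
    obtain x y where pxy: "pr = (x,y)" by (cases pr)
    have n: "infdist x T < r" "infdist y T < r" using near pr pxy by auto
    obtain p where p: "p \<in> T" "dist x p < r" using infdist_lt[OF T(1,2) n(1)] .
    obtain q where q: "q \<in> T" "dist y q < r" using infdist_lt[OF T(1,2) n(2)] .
    have "pr \<in> A" using pr by (simp add: A'_def)
    then have "pr \<in> B (p,q)" using p q pxy by (simp add: B_def)
    then show "pr \<in> (\<Union>i\<in>T\<times>T. B i)" using p q by blast
  qed
  then have "freq z \<mu> (\<Union>i\<in>T\<times>T. B i)" using freq_mono[OF A'] by blast
  then obtain i where "i \<in> T\<times>T" "freq z \<mu> (B i)" using freq_UN[of "T\<times>T"] T(1) by blast
  then show ?thesis by (cases i) (auto simp: B_def)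
qed

end


lemma exists_bounded:
  assumes mu: "\<mu> \<in> free_space z" and f0: "f0 \<in> Lip0 z" "\<mu> f0 \<noteq> 0"
  shows "\<exists>f1 C L1. f1 \<in> Lip0 z \<and> L1-lipschitz_on UNIV f1 \<and> L1 > 0 \<and> C > 0 \<and> (\<forall>t. \<bar>f1 t\<bar> \<le> C) \<and> \<mu> f1 \<noteq> 0"
proof -
  obtain L where L: "L > 0" "L-lipschitz_on UNIV f0" using Lip0_lipE[OF f0(1)] by blast
  define g where "g n t = max (- real n) (min (f0 t) (real n))" for n t
  have f0z: "f0 z = 0" using f0(1) by (simp add: Lip0_def)
  have glip: "L-lipschitz_on UNIV (g n)" for n
    unfolding g_def using L by (intro lip_max lip_min lip_const) auto
  have gL: "g n \<in> Lip0 z" for n using Lip0I[OF _ glip] f0z by (simp add: g_def)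
  have glim: "(\<lambda>n. g n t) \<longlonglongrightarrow> f0 t" for t
  proof (rule tendsto_eventually)
    have "\<forall>n\<ge>nat \<lceil>\<bar>f0 t\<bar>\<rceil>. g n t = f0 t"
    proof (intro allI impI)
      fix n assume "n \<ge> nat \<lceil>\<bar>f0 t\<bar>\<rceil>"
      then have "real n \<ge> \<bar>f0 t\<bar>" by linarith
      then show "g n t = f0 t" by (simp add: g_def abs_le_iff)
    qed
    then show "\<forall>\<^sub>F n in sequentially. g n t = f0 t" unfolding eventually_sequentially by blast
  qed
  have lim: "(\<lambda>n. \<mu> (g n)) \<longlonglongrightarrow> \<mu> f0" using SC[OF mu gL glip f0(1) L(2) glim] .
  obtain n where n: "\<mu> (g n) \<noteq> 0"
  proof (rule ccontr)
    assume "\<not> thesis"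
    then have "\<forall>n. \<mu> (g n) = 0" using that by blast
    then have "(\<lambda>n. \<mu> (g n)) \<longlonglongrightarrow> 0" by simp
    then show False using lim f0(2) LIMSEQ_unique by blast
  qed
  have "\<bar>g n t\<bar> \<le> real n + 1" for t by (auto simp: g_def abs_le_iff max_def min_def)
  then show ?thesis using gL glip L n
    by (intro exI[of _ "g n"] exI[of _ "real n + 1"] exI[of _ L]) auto
qed

lemma construct:
  fixes z :: "'a::complete_space"
  assumes mu: "\<mu> \<in> free_space z"
    and f1: "f1 \<in> Lip0 z" "L1-lipschitz_on UNIV f1" "L1 > 0" "C > 0" "\<And>t. \<bar>f1 t\<bar> \<le> C" "\<mu> f1 \<noteq> 0"
    and fr: "freq z \<mu> UNIV"
  obtains xs ys where "\<And>n. freq z \<mu> {pr. dist (fst pr) xs < 3 * (1/2)^n \<and> dist (snd pr) ys < 3 * (1/2)^n}"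
proof -
  have step: "\<And>A r. freq z \<mu> A \<Longrightarrow> r > 0 \<Longrightarrow> \<exists>p q. freq z \<mu> {pr\<in>A. dist (fst pr) p < r \<and> dist (snd pr) q < r}"
    using keyK[OF mu f1] by blast
  define \<Phi> where "\<Phi> A r = (SOME pq. freq z \<mu> {pr\<in>A. dist (fst pr) (fst pq) < r \<and> dist (snd pr) (snd pq) < r})" for A r
  have \<Phi>: "freq z \<mu> {pr\<in>A. dist (fst pr) (fst (\<Phi> A r)) < r \<and> dist (snd pr) (snd (\<Phi> A r)) < r}"
    if a: "freq z \<mu> A" "r > 0" for A r
  proof -
    obtain p q where "freq z \<mu> {pr\<in>A. dist (fst pr) p < r \<and> dist (snd pr) q < r}" using step[OF a] by blast
    then have "\<exists>pq. freq z \<mu> {pr\<in>A. dist (fst pr) (fst pq) < r \<and> dist (snd pr) (snd pq) < r}"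
      by (intro exI[of _ "(p,q)"]) simp
    then show ?thesis unfolding \<Phi>_def by (rule someI_ex)
  qed
  define rr :: "nat \<Rightarrow> real" where "rr n = (1/2)^n" for n
  have rr: "rr n > 0" "m \<ge> n \<Longrightarrow> rr m \<le> rr n" for m n
    by (auto simp: rr_def power_decreasing)
  define AA where "AA = rec_nat UNIV (\<lambda>n A. {pr\<in>A. dist (fst pr) (fst (\<Phi> A (rr n))) < rr n \<and> dist (snd pr) (snd (\<Phi> A (rr n))) < rr n})"
  define pp where "pp n = fst (\<Phi> (AA n) (rr n))" for n
  define qq where "qq n = snd (\<Phi> (AA n) (rr n))" for n
  have AA0: "AA 0 = UNIV" by (simp add: AA_def)
  have AAS: "AA (Suc n) = {pr\<in>AA n. dist (fst pr) (pp n) < rr n \<and> dist (snd pr) (qq n) < rr n}" for n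
    by (simp add: AA_def pp_def qq_def)
  have frA: "freq z \<mu> (AA n)" for n
  proof (induction n)
    case 0 then show ?case using fr AA0 by simp
  next
    case (Suc n) then show ?case unfolding AAS pp_def qq_def using \<Phi> rr(1) by blast
  qed
  have dec: "decseq AA" by (rule decseq_SucI) (auto simp: AAS)
  have close: "dist (fst pr) (pp n) < rr n \<and> dist (snd pr) (qq n) < rr n" if "pr \<in> AA (Suc n)" for pr n
    using that by (simp add: AAS)
  have cb: "dist (pp n) (pp m) < 2 * rr n \<and> dist (qq n) (qq m) < 2 * rr n" if "m \<ge> n" for m n
  proof -
    obtain x y where xy: "(x,y) \<in> AA (Suc m)" using freq_nonempty[OF frA] by blast
    have "AA (Suc m) \<subseteq> AA (Suc n)" using decseqD[OF dec, of "Suc n" "Suc m"] that by simp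
    then have xy2: "(x,y) \<in> AA (Suc n)" using xy by blast
    have a: "dist x (pp m) < rr m" "dist y (qq m) < rr m" using close[OF xy] by auto
    have b: "dist x (pp n) < rr n" "dist y (qq n) < rr n" using close[OF xy2] by auto
    have "dist (pp n) (pp m) \<le> dist x (pp n) + dist x (pp m)" by (rule dist_triangle3)
    moreover have "dist (qq n) (qq m) \<le> dist y (qq n) + dist y (qq m)" by (rule dist_triangle3)
    ultimately show ?thesis using a b rr(2)[OF that] by linarith
  qed
  have cauchy: "Cauchy pp \<and> Cauchy qq"
  proof -
    have *: "\<exists>M. \<forall>m\<ge>M. \<forall>n\<ge>M. dist (pp m) (pp n) < e \<and> dist (qq m) (qq n) < e" if e: "e > 0" for e
    proof -
      obtain M where M: "(1/2::real)^M < e/4" using real_arch_pow_inv[of "e/4" "1/2::real"] e by auto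
      show ?thesis
      proof (intro exI allI impI)
        fix m n assume mn: "m \<ge> M" "n \<ge> M"
        have "dist (pp m) (pp n) \<le> dist (pp M) (pp m) + dist (pp M) (pp n)" by (rule dist_triangle3)
        moreover have "dist (qq m) (qq n) \<le> dist (qq M) (qq m) + dist (qq M) (qq n)" by (rule dist_triangle3)
        ultimately show "dist (pp m) (pp n) < e \<and> dist (qq m) (qq n) < e"
          using cb[OF mn(1)] cb[OF mn(2)] M by (simp add: rr_def)
      qed
    qed
    show ?thesis
    proof
      show "Cauchy pp" by (rule metric_CauchyI) (use * in blast)
      show "Cauchy qq" by (rule metric_CauchyI) (use * in blast)
    qed
  qed
  obtain xs where xs: "pp \<longlonglongrightarrow> xs" using cauchy Cauchy_convergent_iff convergent_def by blast
  obtain ys where ys: "qq \<longlonglongrightarrow> ys" using cauchy Cauchy_convergent_iff convergent_def by blast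
  have pxs: "dist (pp n) xs \<le> 2 * rr n \<and> dist (qq n) ys \<le> 2 * rr n" for n
  proof
    have "(\<lambda>m. dist (pp n) (pp m)) \<longlonglongrightarrow> dist (pp n) xs" by (intro tendsto_dist tendsto_const xs)
    then show "dist (pp n) xs \<le> 2 * rr n"
      by (rule LIMSEQ_le_const2) (use cb in \<open>auto intro: less_imp_le\<close>)
    have "(\<lambda>m. dist (qq n) (qq m)) \<longlonglongrightarrow> dist (qq n) ys" by (intro tendsto_dist tendsto_const ys)
    then show "dist (qq n) ys \<le> 2 * rr n"
      by (rule LIMSEQ_le_const2) (use cb in \<open>auto intro: less_imp_le\<close>)
  qed
  show ?thesis
  proof (rule that)
    fix n
    have "AA (Suc n) \<subseteq> {pr. dist (fst pr) xs < 3 * (1/2)^n \<and> dist (snd pr) ys < 3 * (1/2)^n}"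
    proof
      fix pr assume pr: "pr \<in> AA (Suc n)"
      have "dist (fst pr) xs \<le> dist (fst pr) (pp n) + dist (pp n) xs" by (rule dist_triangle)
      moreover have "dist (snd pr) ys \<le> dist (snd pr) (qq n) + dist (qq n) ys" by (rule dist_triangle)
      ultimately show "pr \<in> {pr. dist (fst pr) xs < 3 * (1/2)^n \<and> dist (snd pr) ys < 3 * (1/2)^n}"
        using close[OF pr] pxs[of n] by (simp add: rr_def)
    qed
    then show "freq z \<mu> {pr. dist (fst pr) xs < 3 * (1/2)^n \<and> dist (snd pr) ys < 3 * (1/2)^n}"
      using freq_mono[OF frA] by blast
  qed
qed



lemma half_pow_small:
  assumes "e > 0" obtains M where "\<And>n. n \<ge> M \<Longrightarrow> 3 * (1/2::real)^n < e"
proof -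
  obtain M where M: "(1/2::real)^M < e/3" using real_arch_pow_inv[of "e/3" "1/2::real"] assms by auto
  have "3 * (1/2::real)^n < e" if "n \<ge> M" for n
  proof -
    have "(1/2::real)^n \<le> (1/2)^M" by (rule power_decreasing[OF that]) auto
    then show ?thesis using M by linarith
  qed
  then show ?thesis using that by blast
qed

theorem proposition2p13:
  fixes z :: "'a::complete_space"
  assumes "\<mu> \<in> weak_closure z (molecules :: (('a \<Rightarrow> real) \<Rightarrow> real) set)"
  shows "(\<forall>f\<in>Lip0 z. \<mu> f = 0) \<or>
         (\<exists>x y. x \<noteq> y \<and> (\<forall>f\<in>Lip0 z. \<mu> f = molecule x y f))"
proof (cases "\<forall>f\<in>Lip0 z. \<mu> f = 0")
  case True then show ?thesis by blast
next
  case False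
  then obtain f0 where f0: "f0 \<in> Lip0 z" "\<mu> f0 \<noteq> 0" by blast
  have mu: "\<mu> \<in> free_space z" using assms by (simp add: weak_closure_def)
  have fr: "freq z \<mu> UNIV" using freq_start[OF assms] .
  obtain f1 C L1 where f1: "f1 \<in> Lip0 z" "L1-lipschitz_on UNIV f1" "L1 > 0" "C > 0" "\<And>t. \<bar>f1 t\<bar> \<le> C" "\<mu> f1 \<noteq> 0"
    using exists_bounded[OF mu f0] by blast
  obtain xs ys where B: "\<And>n. freq z \<mu> {pr. dist (fst pr) xs < 3 * (1/2)^n \<and> dist (snd pr) ys < 3 * (1/2)^n}"
    using construct[OF mu f1 fr] by blast
  show ?thesis
  proof (cases "xs = ys")
    case True
    have loc: "\<mu> g = 0" if g: "g \<in> Lip0 z" "\<rho> > 0" "\<And>t. dist t xs < \<rho> \<Longrightarrow> g t = c" for g \<rho> c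
    proof (rule ccontr)
      assume ne: "\<mu> g \<noteq> 0"
      obtain n where n: "3 * (1/2::real)^n < \<rho>" using half_pow_small[OF g(2)] by blast
      obtain x y where xy: "(x,y) \<in> {pr. dist (fst pr) xs < 3 * (1/2)^n \<and> dist (snd pr) ys < 3 * (1/2)^n}"
        "x \<noteq> y" "\<bar>\<mu> g - molecule x y g\<bar> < \<bar>\<mu> g\<bar>"
        using freq_get[OF B g(1), of "\<bar>\<mu> g\<bar>"] ne by auto
      have "g x = c" "g y = c" using xy(1) n g(3) True by auto
      then show False using xy(3) by (simp add: mol_eq)
    qed
    have "\<forall>f\<in>Lip0 z. \<mu> f = 0"
    proof
      fix f assume f: "f \<in> Lip0 z"
      obtain L where L: "L > 0" "L-lipschitz_on UNIV f" using Lip0_lipE[OF f] by blast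
      have fz: "f z = 0" using f by (simp add: Lip0_def)
      define \<rho> :: "nat \<Rightarrow> real" where "\<rho> n = inverse (real (Suc n))" for n
      define \<phi> where "\<phi> n t = L * max 0 (dist t xs - \<rho> n)" for n t
      define g where "g n t = max (f xs - \<phi> n t) (min (f t) (f xs + \<phi> n t))" for n t
      define G where "G n t = g n t - g n z" for n t
      have \<phi>lip: "L-lipschitz_on UNIV (\<phi> n)" for n
      proof -
        have "1-lipschitz_on UNIV (\<lambda>t. dist t xs - \<rho> n)"
          using lipschitz_on_diff[OF lip_dist[of UNIV xs] lip_const[of 0 UNIV "\<rho> n"]] by simp
        from lip_scaled_pos[OF this, of L] L(1) show ?thesis unfolding \<phi>_def by simp
      qed
      have glip: "L-lipschitz_on UNIV (g n)" for n
      proof -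
        have a: "L-lipschitz_on UNIV (\<lambda>t. f xs - \<phi> n t)"
          using lipschitz_on_diff[OF lip_const[of 0 UNIV "f xs"] \<phi>lip[of n]] by simp
        have b: "L-lipschitz_on UNIV (\<lambda>t. f xs + \<phi> n t)"
          using lipschitz_on_add[OF lip_const[of 0 UNIV "f xs"] \<phi>lip[of n]] by simp
        show ?thesis unfolding g_def by (intro lip_max lip_min a b L(2))
      qed
      have Glip: "L-lipschitz_on UNIV (G n)" for n
        using lipschitz_on_diff[OF glip[of n] lip_const[of 0 UNIV "g n z"]] by (simp add: G_def)
      have GL: "G n \<in> Lip0 z" for n using Lip0I[OF _ Glip[of n]] by (simp add: G_def)
      have G0: "\<mu> (G n) = 0" for n
      proof (rule loc[OF GL])
        show "\<rho> n > 0" by (simp add: \<rho>_def)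
        fix t assume "dist t xs < \<rho> n"
        then have "\<phi> n t = 0" by (simp add: \<phi>_def)
        then show "G n t = f xs - g n z" by (simp add: G_def g_def)
      qed
      have glim: "(\<lambda>n. g n t) \<longlonglongrightarrow> f t" for t
      proof -
        have r: "\<rho> \<longlonglongrightarrow> 0" unfolding \<rho>_def by (rule LIMSEQ_inverse_real_of_nat)
        have "(\<lambda>n. \<phi> n t) \<longlonglongrightarrow> L * max 0 (dist t xs - 0)"
          unfolding \<phi>_def by (intro tendsto_intros r)
        then have "(\<lambda>n. g n t) \<longlonglongrightarrow> max (f xs - L * max 0 (dist t xs - 0)) (min (f t) (f xs + L * max 0 (dist t xs - 0)))"
          unfolding g_def by (intro tendsto_intros)
        moreover have "\<bar>f t - f xs\<bar> \<le> L * dist t xs" using lipschitz_onD[OF L(2)] by (simp add: dist_real_def)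
        then have "max (f xs - L * max 0 (dist t xs - 0)) (min (f t) (f xs + L * max 0 (dist t xs - 0))) = f t"
          by (simp add: abs_le_iff max_def min_def)
        ultimately show ?thesis by simp
      qed
      have Glim: "(\<lambda>n. G n t) \<longlonglongrightarrow> f t" for t
      proof -
        have "(\<lambda>n. G n t) \<longlonglongrightarrow> f t - f z" unfolding G_def by (intro tendsto_diff glim)
        then show ?thesis using fz by simp
      qed
      have "(\<lambda>n. \<mu> (G n)) \<longlonglongrightarrow> \<mu> f" using SC[OF mu GL Glip f L(2) Glim] .
      moreover have "(\<lambda>n. \<mu> (G n)) \<longlonglongrightarrow> 0" using G0 by simp
      ultimately show "\<mu> f = 0" using LIMSEQ_unique by blast
    qed
    then show ?thesis by blast
  next
    case False
    have "\<forall>f\<in>Lip0 z. \<mu> f = molecule xs ys f"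
    proof
      fix f assume f: "f \<in> Lip0 z"
      obtain L where L: "L > 0" "L-lipschitz_on UNIV f" using Lip0_lipE[OF f] by blast
      have "\<forall>n. \<exists>xy. fst xy \<noteq> snd xy \<and> dist (fst xy) xs < 3 * (1/2)^n \<and> dist (snd xy) ys < 3 * (1/2)^n
          \<and> \<bar>\<mu> f - molecule (fst xy) (snd xy) f\<bar> < 3 * (1/2)^n"
      proof
        fix n
        obtain x y where "(x,y) \<in> {pr. dist (fst pr) xs < 3 * (1/2)^n \<and> dist (snd pr) ys < 3 * (1/2)^n}"
          "x \<noteq> y" "\<bar>\<mu> f - molecule x y f\<bar> < 3 * (1/2)^n"
          using freq_get[OF B f, of "3 * (1/2)^n" n] by auto
        then show "\<exists>xy. fst xy \<noteq> snd xy \<and> dist (fst xy) xs < 3 * (1/2)^n \<and> dist (snd xy) ys < 3 * (1/2)^n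
          \<and> \<bar>\<mu> f - molecule (fst xy) (snd xy) f\<bar> < 3 * (1/2)^n"
          by (intro exI[of _ "(x,y)"]) simp
      qed
      then obtain P where P: "\<And>n. fst (P n) \<noteq> snd (P n) \<and> dist (fst (P n)) xs < 3 * (1/2)^n \<and> dist (snd (P n)) ys < 3 * (1/2)^n
          \<and> \<bar>\<mu> f - molecule (fst (P n)) (snd (P n)) f\<bar> < 3 * (1/2)^n"
        by metis
      define X where "X n = fst (P n)" for n
      define Y where "Y n = snd (P n)" for n
      have X: "X \<longlonglongrightarrow> xs"
      proof (rule metric_LIMSEQ_I)
        fix e :: real assume "e > 0"
        then obtain M where "\<And>n. n \<ge> M \<Longrightarrow> 3 * (1/2::real)^n < e" using half_pow_small by blast
        then show "\<exists>M. \<forall>n\<ge>M. dist (X n) xs < e" using P unfolding X_def by (meson less_trans)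
      qed
      have Y: "Y \<longlonglongrightarrow> ys"
      proof (rule metric_LIMSEQ_I)
        fix e :: real assume "e > 0"
        then obtain M where "\<And>n. n \<ge> M \<Longrightarrow> 3 * (1/2::real)^n < e" using half_pow_small by blast
        then show "\<exists>M. \<forall>n\<ge>M. dist (Y n) ys < e" using P unfolding Y_def by (meson less_trans)
      qed
      have M1: "(\<lambda>n. molecule (X n) (Y n) f) \<longlonglongrightarrow> \<mu> f"
      proof (rule metric_LIMSEQ_I)
        fix e :: real assume "e > 0"
        then obtain M where M: "\<And>n. n \<ge> M \<Longrightarrow> 3 * (1/2::real)^n < e" using half_pow_small by blast
        have "dist (molecule (X n) (Y n) f) (\<mu> f) < e" if "n \<ge> M" for n
          using P[of n] M[OF that] unfolding X_def Y_def by (simp add: dist_real_def abs_minus_commute)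
        then show "\<exists>M. \<forall>n\<ge>M. dist (molecule (X n) (Y n) f) (\<mu> f) < e" by blast
      qed
      have cont: "isCont f x" for x
        using lipschitz_on_continuous_on[OF L(2)] continuous_on_eq_continuous_at[of UNIV f] by simp
      have "(\<lambda>n. (f (X n) - f (Y n)) / dist (X n) (Y n)) \<longlonglongrightarrow> (f xs - f ys) / dist xs ys"
        using False by (intro tendsto_intros isCont_tendsto_compose[OF cont] X Y) simp
      then have M2: "(\<lambda>n. molecule (X n) (Y n) f) \<longlonglongrightarrow> molecule xs ys f" by (simp add: mol_eq)
      show "\<mu> f = molecule xs ys f" using M1 M2 LIMSEQ_unique by blast
    qed
    then show ?thesis using False by blast
  qed
qed

end
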